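(* Let $H$ be an Abelian group, $X$ a simplicial set and $\gamma:X_2\to H$ a normalized 2-cocycle. Then the maps $\eta_n:X_n\to N(H)_{n-1}=H^{n-1}$ defined inductively by $\eta_1(x)=0$, $\eta_2(x)=\gamma(x)$ and \[ \eta_n(x)=\big(\gamma(d_3\cdots d_n(x)),\ \eta_{n-1}(d_1x)-\eta_{n-1}(d_0x)\big)\in H\times H^{n-2}\qquad(n\ge3) \] define an $N(H)$-valued twisting function on $X$.
   Context: $N(H)$ is the nerve of $H$: $N(H)_n=H^n$, $d_0$ drops the first entry, $d_n$ drops the last, $d_i$ ($0<i<n$) replaces $a_i,a_{i+1}$ by $a_i+a_{i+1}$, $s_j$ inserts $0$ after the $j$-th entry. A normalized 2-cocycle is $\gamma:X_2\to H$ vanishing on degenerate simplices with $\gamma(d_0\sigma)-\gamma(d_1\sigma)+\gamma(d_2\sigma)-\gamma(d_3\sigma)=0$ for all $\sigma\in X_3$. An $N(H)$-valued twisting function is a family $\eta_n:X_n\to N(H)_{n-1}$, $n\ge1$, satisfying $d_0\eta(x)=\eta(d_1x)-\eta(d_0x)$, $d_i\eta(x)=\eta(d_{i+1}x)$ for $i>0$, $\eta(s_0x)=0$, $\eta(s_jx)=s_{j-1}\eta(x)$ for $j>0$; equivalently, it makes $\{N(H)_n\times X_n\}$ a simplicial set with $d_0(g,x)=(d_0g+\eta(x),d_0x)$ and the other structure maps componentwise. *)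

theory Defs
  imports Main
begin

definition simplicial_set ::
  "(nat \<Rightarrow> 'x set) \<Rightarrow> (nat \<Rightarrow> nat \<Rightarrow> 'x \<Rightarrow> 'x) \<Rightarrow> (nat \<Rightarrow> nat \<Rightarrow> 'x \<Rightarrow> 'x) \<Rightarrow> bool" where
  "simplicial_set X d s \<longleftrightarrow>
     (\<forall>n i x. 1 \<le> n \<longrightarrow> i \<le> n \<longrightarrow> x \<in> X n \<longrightarrow> d n i x \<in> X (n - 1)) \<and>
     (\<forall>n j x. j \<le> n \<longrightarrow> x \<in> X n \<longrightarrow> s n j x \<in> X (Suc n)) \<and>
     \<comment> \<open>d_i d_j = d_{j-1} d_i for i < j\<close>
     (\<forall>n i j x. 2 \<le> n \<longrightarrow> i < j \<longrightarrow> j \<le> n \<longrightarrow> x \<in> X n \<longrightarrow>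
        d (n - 1) i (d n j x) = d (n - 1) (j - 1) (d n i x)) \<and>
     \<comment> \<open>d_i s_j = s_{j-1} d_i for i < j\<close>
     (\<forall>n i j x. i < j \<longrightarrow> j \<le> n \<longrightarrow> x \<in> X n \<longrightarrow>
        d (Suc n) i (s n j x) = s (n - 1) (j - 1) (d n i x)) \<and>
     \<comment> \<open>d_j s_j = id = d_{j+1} s_j\<close>
     (\<forall>n j x. j \<le> n \<longrightarrow> x \<in> X n \<longrightarrow>
        d (Suc n) j (s n j x) = x \<and> d (Suc n) (Suc j) (s n j x) = x) \<and>
     \<comment> \<open>d_i s_j = s_j d_{i-1} for i > j+1\<close>
     (\<forall>n i j x. Suc j < i \<longrightarrow> i \<le> Suc n \<longrightarrow> x \<in> X n \<longrightarrow>
        d (Suc n) i (s n j x) = s (n - 1) j (d n (i - 1) x)) \<and>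
     \<comment> \<open>s_i s_j = s_{j+1} s_i for i <= j\<close>
     (\<forall>n i j x. i \<le> j \<longrightarrow> j \<le> n \<longrightarrow> x \<in> X n \<longrightarrow>
        s (Suc n) i (s n j x) = s (Suc n) (Suc j) (s n i x))"

section \<open>The nerve N(H) of an abelian group: N(H)_n = H^n as lists of length n\<close>

definition nerve_face :: "nat \<Rightarrow> nat \<Rightarrow> 'h::ab_group_add list \<Rightarrow> 'h list" where
  "nerve_face n i g =
     (if i = 0 then tl g
      else if i = n then butlast g
      else take (i - 1) g @ [g ! (i - 1) + g ! i] @ drop (Suc i) g)"

definition nerve_degen :: "nat \<Rightarrow> nat \<Rightarrow> 'h::ab_group_add list \<Rightarrow> 'h list" where
  "nerve_degen n j g = take j g @ [0] @ drop j g"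

definition nerve_minus :: "'h::ab_group_add list \<Rightarrow> 'h list \<Rightarrow> 'h list" where
  "nerve_minus g h = map2 (-) g h"

definition normalized_2_cocycle ::
  "(nat \<Rightarrow> 'x set) \<Rightarrow> (nat \<Rightarrow> nat \<Rightarrow> 'x \<Rightarrow> 'x) \<Rightarrow> (nat \<Rightarrow> nat \<Rightarrow> 'x \<Rightarrow> 'x)
    \<Rightarrow> ('x \<Rightarrow> 'h::ab_group_add) \<Rightarrow> bool" where
  "normalized_2_cocycle X d s \<gamma> \<longleftrightarrow>
     (\<forall>x j. x \<in> X 1 \<longrightarrow> j \<le> 1 \<longrightarrow> \<gamma> (s 1 j x) = 0) \<and>
     (\<forall>\<sigma> \<in> X 3. \<gamma> (d 3 0 \<sigma>) - \<gamma> (d 3 1 \<sigma>) + \<gamma> (d 3 2 \<sigma>) - \<gamma> (d 3 3 \<sigma>) = 0)"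

definition twisting_function ::
  "(nat \<Rightarrow> 'x set) \<Rightarrow> (nat \<Rightarrow> nat \<Rightarrow> 'x \<Rightarrow> 'x) \<Rightarrow> (nat \<Rightarrow> nat \<Rightarrow> 'x \<Rightarrow> 'x)
    \<Rightarrow> (nat \<Rightarrow> 'x \<Rightarrow> 'h::ab_group_add list) \<Rightarrow> bool" where
  "twisting_function X d s \<eta> \<longleftrightarrow>
     (\<forall>n x. 1 \<le> n \<longrightarrow> x \<in> X n \<longrightarrow> length (\<eta> n x) = n - 1) \<and>
     (\<forall>n x. 2 \<le> n \<longrightarrow> x \<in> X n \<longrightarrow>
        nerve_face (n - 1) 0 (\<eta> n x) = nerve_minus (\<eta> (n - 1) (d n 1 x)) (\<eta> (n - 1) (d n 0 x))) \<and>
     (\<forall>n i x. 2 \<le> n \<longrightarrow> 0 < i \<longrightarrow> i \<le> n - 1 \<longrightarrow> x \<in> X n \<longrightarrow>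
        nerve_face (n - 1) i (\<eta> n x) = \<eta> (n - 1) (d n (Suc i) x)) \<and>
     (\<forall>n x. x \<in> X n \<longrightarrow> \<eta> (Suc n) (s n 0 x) = replicate n 0) \<and>
     (\<forall>n j x. 0 < j \<longrightarrow> j \<le> n \<longrightarrow> x \<in> X n \<longrightarrow>
        \<eta> (Suc n) (s n j x) = nerve_degen (n - 1) (j - 1) (\<eta> n x))"

text \<open>top_faces d k x, for x in X (k+2), is d_3 ... d_{k+2} x (d_{k+2} applied first).\<close>
fun top_faces :: "(nat \<Rightarrow> nat \<Rightarrow> 'x \<Rightarrow> 'x) \<Rightarrow> nat \<Rightarrow> 'x \<Rightarrow> 'x" where
  "top_faces d 0 x = x"
| "top_faces d (Suc k) x = top_faces d k (d (k + 3) (k + 3) x)"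

fun eta_cocycle :: "('x \<Rightarrow> 'h::ab_group_add) \<Rightarrow> (nat \<Rightarrow> nat \<Rightarrow> 'x \<Rightarrow> 'x) \<Rightarrow> nat \<Rightarrow> 'x \<Rightarrow> 'h list" where
  "eta_cocycle \<gamma> d 0 x = []"
| "eta_cocycle \<gamma> d (Suc 0) x = []"
| "eta_cocycle \<gamma> d (Suc (Suc 0)) x = [\<gamma> x]"
| "eta_cocycle \<gamma> d (Suc (Suc (Suc k))) x =
     \<gamma> (top_faces d (Suc k) x) #
     nerve_minus (eta_cocycle \<gamma> d (Suc (Suc k)) (d (Suc (Suc (Suc k))) 1 x))
                 (eta_cocycle \<gamma> d (Suc (Suc k)) (d (Suc (Suc (Suc k))) 0 x))"

end

theory Submission
  imports Defs
begin

lemmas ss_d = simplicial_set_def[THEN iffD1, THEN conjunct1, rule_format]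
lemma ss_d': "simplicial_set X d s \<Longrightarrow> i \<le> Suc n \<Longrightarrow> x \<in> X (Suc n) \<Longrightarrow> d (Suc n) i x \<in> X n"
  using ss_d[of X d s "Suc n" i x] by simp
lemmas ss_s = simplicial_set_def[THEN iffD1, THEN conjunct2, THEN conjunct1, rule_format]
lemmas ss_dd0 = simplicial_set_def[THEN iffD1, THEN conjunct2, THEN conjunct2, THEN conjunct1, rule_format]
lemma ss_dd: "simplicial_set X d s \<Longrightarrow> i < j \<Longrightarrow> j \<le> Suc (Suc m) \<Longrightarrow> x \<in> X (Suc (Suc m)) \<Longrightarrow>
   d (Suc m) i (d (Suc (Suc m)) j x) = d (Suc m) (j - 1) (d (Suc (Suc m)) i x)"
  using ss_dd0[of X d s "Suc (Suc m)" i j x] by simp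
lemmas ss_ds1 = simplicial_set_def[THEN iffD1, THEN conjunct2, THEN conjunct2, THEN conjunct2, THEN conjunct1, rule_format]
lemmas ss_ds23 = simplicial_set_def[THEN iffD1, THEN conjunct2, THEN conjunct2, THEN conjunct2, THEN conjunct2, THEN conjunct1, rule_format]
lemmas ss_ds2 = ss_ds23[THEN conjunct1]
lemmas ss_ds3 = ss_ds23[THEN conjunct2]
lemmas ss_ds4 = simplicial_set_def[THEN iffD1, THEN conjunct2, THEN conjunct2, THEN conjunct2, THEN conjunct2, THEN conjunct2, THEN conjunct1, rule_format]

lemma top_faces_Suc: "top_faces d (Suc k) x = top_faces d k (d (Suc (Suc (Suc k))) (Suc (Suc (Suc k))) x)"
  by (simp add: numeral_3_eq_3)
declare top_faces.simps(2)[simp del]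
declare top_faces_Suc[simp]

fun top_faces4 :: "(nat \<Rightarrow> nat \<Rightarrow> 'x \<Rightarrow> 'x) \<Rightarrow> nat \<Rightarrow> 'x \<Rightarrow> 'x" where
  "top_faces4 d 0 x = x"
| "top_faces4 d (Suc k) x = top_faces4 d k (d (Suc (Suc (Suc (Suc k)))) (Suc (Suc (Suc (Suc k)))) x)"

lemma tf_mem: "simplicial_set X d s \<Longrightarrow> x \<in> X (Suc (Suc k)) \<Longrightarrow> top_faces d k x \<in> X (Suc (Suc 0))"
proof (induction k arbitrary: x)
  case 0 then show ?case by simp
next
  case (Suc k)
  have "d (Suc (Suc (Suc k))) (Suc (Suc (Suc k))) x \<in> X (Suc (Suc k))"
    using ss_d'[OF Suc.prems(1), of "Suc (Suc (Suc k))" "Suc (Suc k)" x] Suc.prems(2) by simp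
  from Suc.IH[OF Suc.prems(1) this] show ?case by simp
qed

lemma tf4_mem: "simplicial_set X d s \<Longrightarrow> x \<in> X (Suc (Suc (Suc k))) \<Longrightarrow> top_faces4 d k x \<in> X (Suc (Suc (Suc 0)))"
proof (induction k arbitrary: x)
  case 0 then show ?case by simp
next
  case (Suc k)
  have "d (Suc (Suc (Suc (Suc k)))) (Suc (Suc (Suc (Suc k)))) x \<in> X (Suc (Suc (Suc k)))"
    using ss_d'[OF Suc.prems(1)] Suc.prems(2) by simp
  from Suc.IH[OF Suc.prems(1) this] show ?case by simp
qed

lemma tf_face_high: "simplicial_set X d s \<Longrightarrow> x \<in> X (Suc (Suc (Suc k))) \<Longrightarrow> Suc (Suc (Suc 0)) \<le> j \<Longrightarrow> j \<le> Suc (Suc (Suc k)) \<Longrightarrow>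
   top_faces d k (d (Suc (Suc (Suc k))) j x) = top_faces d (Suc k) x"
proof (induction k arbitrary: x)
  case 0 then show ?case by simp
next
  case (Suc k)
  show ?case
  proof (cases "j = Suc (Suc (Suc (Suc k)))")
    case True then show ?thesis by simp
  next
    case False
    have m: "d (Suc (Suc (Suc (Suc k)))) (Suc (Suc (Suc (Suc k)))) x \<in> X (Suc (Suc (Suc k)))"
      using ss_d'[OF Suc.prems(1)] Suc.prems(2) by simp
    have e: "d (Suc (Suc (Suc k))) j (d (Suc (Suc (Suc (Suc k)))) (Suc (Suc (Suc (Suc k)))) x) = d (Suc (Suc (Suc k))) (Suc (Suc (Suc k))) (d (Suc (Suc (Suc (Suc k)))) j x)"
      using ss_dd[OF Suc.prems(1), of j "Suc (Suc (Suc (Suc k)))" "Suc (Suc k)" x] Suc.prems False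
      by simp
    have "top_faces d (Suc k) (d (Suc (Suc (Suc (Suc k)))) j x) = top_faces d k (d (Suc (Suc (Suc k))) j (d (Suc (Suc (Suc (Suc k)))) (Suc (Suc (Suc (Suc k)))) x))"
      using e by simp
    also have "\<dots> = top_faces d (Suc k) (d (Suc (Suc (Suc (Suc k)))) (Suc (Suc (Suc (Suc k)))) x)"
      using Suc.IH[OF Suc.prems(1) m] Suc.prems False by simp
    also have "\<dots> = top_faces d (Suc (Suc k)) x" by simp
    finally show ?thesis .
  qed
qed

lemma tf_face_low: "simplicial_set X d s \<Longrightarrow> x \<in> X (Suc (Suc (Suc k))) \<Longrightarrow> i \<le> Suc (Suc (Suc 0)) \<Longrightarrow>
   top_faces d k (d (Suc (Suc (Suc k))) i x) = d (Suc (Suc (Suc 0))) i (top_faces4 d k x)"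
proof (induction k arbitrary: x)
  case 0 then show ?case by simp
next
  case (Suc k)
  have m: "d (Suc (Suc (Suc (Suc k)))) (Suc (Suc (Suc (Suc k)))) x \<in> X (Suc (Suc (Suc k)))"
    using ss_d'[OF Suc.prems(1)] Suc.prems(2) by simp
  have e: "d (Suc (Suc (Suc k))) i (d (Suc (Suc (Suc (Suc k)))) (Suc (Suc (Suc (Suc k)))) x) = d (Suc (Suc (Suc k))) (Suc (Suc (Suc k))) (d (Suc (Suc (Suc (Suc k)))) i x)"
    using ss_dd[OF Suc.prems(1), of i "Suc (Suc (Suc (Suc k)))" "Suc (Suc k)" x] Suc.prems
    by simp
  have "top_faces d (Suc k) (d (Suc (Suc (Suc (Suc k)))) i x) = top_faces d k (d (Suc (Suc (Suc k))) i (d (Suc (Suc (Suc (Suc k)))) (Suc (Suc (Suc (Suc k)))) x))"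
    using e by simp
  also have "\<dots> = d (Suc (Suc (Suc 0))) i (top_faces4 d k (d (Suc (Suc (Suc (Suc k)))) (Suc (Suc (Suc (Suc k)))) x))"
    using Suc.IH[OF Suc.prems(1) m] Suc.prems by simp
  also have "\<dots> = d (Suc (Suc (Suc 0))) i (top_faces4 d (Suc k) x)" by simp
  finally show ?case .
qed

lemma tf_top: "simplicial_set X d s \<Longrightarrow> x \<in> X (Suc (Suc (Suc k))) \<Longrightarrow>
   top_faces d (Suc k) x = d (Suc (Suc (Suc 0))) (Suc (Suc (Suc 0))) (top_faces4 d k x)"
  using tf_face_high[of X d s x k "Suc (Suc (Suc 0))"] tf_face_low[of X d s x k "Suc (Suc (Suc 0))"] by simp

lemma tf_degen_low: "simplicial_set X d s \<Longrightarrow> x \<in> X (Suc k) \<Longrightarrow> j \<le> Suc 0 \<Longrightarrow>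
   \<exists>y\<in>X (Suc 0). top_faces d k (s (Suc k) j x) = s (Suc 0) j y"
proof (induction k arbitrary: x)
  case 0 then show ?case by auto
next
  case (Suc k)
  have m: "d (Suc (Suc k)) (Suc (Suc k)) x \<in> X (Suc k)" using ss_d'[OF Suc.prems(1)] Suc.prems(2) by simp
  have e: "d (Suc (Suc (Suc k))) (Suc (Suc (Suc k))) (s (Suc (Suc k)) j x) = s (Suc k) j (d (Suc (Suc k)) (Suc (Suc k)) x)"
    using ss_ds4[OF Suc.prems(1), of j "Suc (Suc (Suc k))" "Suc (Suc k)" x] Suc.prems by simp
  have "top_faces d (Suc k) (s (Suc (Suc k)) j x) = top_faces d k (s (Suc k) j (d (Suc (Suc k)) (Suc (Suc k)) x))"
    using e by simp
  then show ?case using Suc.IH[OF Suc.prems(1) m Suc.prems(3)] by simp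
qed

lemma tf_degen_high: "simplicial_set X d s \<Longrightarrow> x \<in> X (Suc (Suc k)) \<Longrightarrow> Suc (Suc 0) \<le> j \<Longrightarrow> j \<le> Suc (Suc k) \<Longrightarrow>
   top_faces d (Suc k) (s (Suc (Suc k)) j x) = top_faces d k x"
proof (induction k arbitrary: x)
  case 0
  then have "j = Suc (Suc 0)" by simp
  then show ?case using ss_ds3[OF 0(1), of "Suc (Suc 0)" "Suc (Suc 0)" x] 0 by simp
next
  case (Suc k)
  show ?case
  proof (cases "j = Suc (Suc (Suc k))")
    case True
    have "d (Suc (Suc (Suc (Suc k)))) (Suc (Suc (Suc (Suc k)))) (s (Suc (Suc (Suc k))) j x) = x"
      using ss_ds3[OF Suc.prems(1), of "Suc (Suc (Suc k))" "Suc (Suc (Suc k))" x] Suc.prems True by simp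
    then show ?thesis by (simp only: top_faces_Suc)
  next
    case False
    have m: "d (Suc (Suc (Suc k))) (Suc (Suc (Suc k))) x \<in> X (Suc (Suc k))" using ss_d'[OF Suc.prems(1)] Suc.prems(2) by simp
    have e: "d (Suc (Suc (Suc (Suc k)))) (Suc (Suc (Suc (Suc k)))) (s (Suc (Suc (Suc k))) j x) = s (Suc (Suc k)) j (d (Suc (Suc (Suc k))) (Suc (Suc (Suc k))) x)"
      using ss_ds4[OF Suc.prems(1), of j "Suc (Suc (Suc (Suc k)))" "Suc (Suc (Suc k))" x] Suc.prems False by simp
    have "top_faces d (Suc (Suc k)) (s (Suc (Suc (Suc k))) j x) = top_faces d (Suc k) (s (Suc (Suc k)) j (d (Suc (Suc (Suc k))) (Suc (Suc (Suc k))) x))"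
      using e by (simp only: top_faces_Suc)
    also have "\<dots> = top_faces d k (d (Suc (Suc (Suc k))) (Suc (Suc (Suc k))) x)"
      using Suc.IH[OF Suc.prems(1) m] Suc.prems False by simp
    also have "\<dots> = top_faces d (Suc k) x" by (simp only: top_faces_Suc)
    finally show ?thesis .
  qed
qed


lemma nm_len[simp]: "length (nerve_minus u w) = min (length u) (length w)"
  by (simp add: nerve_minus_def)
lemma nm_cons[simp]: "nerve_minus (a # u) (b # w) = (a - b) # nerve_minus u w"
  by (simp add: nerve_minus_def)
lemma nm_nil[simp]: "nerve_minus [] w = []" "nerve_minus u [] = []"
  by (simp_all add: nerve_minus_def)
lemma nm_self: "nerve_minus u u = replicate (length u) (0::'h::ab_group_add)"
  by (induction u) auto
lemma nm_zero: "nerve_minus u (replicate (length u) (0::'h::ab_group_add)) = u"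
  by (induction u) auto
lemma nm_assoc: "length A = length B \<Longrightarrow> length C = length B \<Longrightarrow>
   nerve_minus (nerve_minus A B) (nerve_minus C (B::'h::ab_group_add list)) = nerve_minus A C"
proof (induction A arbitrary: B C)
  case Nil then show ?case by simp
next
  case (Cons a A)
  then obtain b B' c C' where "B = b # B'" "C = c # C'"
    by (metis length_Suc_conv)
  with Cons show ?case by simp
qed

lemma nf_0: "nerve_face m 0 g = tl g"
  by (simp add: nerve_face_def)
lemma nf_1: "nerve_face (Suc (Suc m)) 1 (a # b # w) = (a + b) # w"
  by (simp add: nerve_face_def)
lemma nf_cons: "2 \<le> i \<Longrightarrow> i \<le> m \<Longrightarrow> length v = m - 1 \<Longrightarrow>
   nerve_face m i (a # v) = a # nerve_face (m - 1) (i - 1) v"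
proof -
  assume a: "2 \<le> i" "i \<le> m" "length v = m - 1"
  show ?thesis
  proof (cases "i = m")
    case True
    then have "v \<noteq> []" using a by auto
    then show ?thesis using True a by (simp add: nerve_face_def)
  next
    case False
    obtain i' where i': "i = Suc (Suc i')" using a(1) by (metis add_2_eq_Suc le_Suc_ex)
    show ?thesis using False a unfolding nerve_face_def i' by (auto simp: nth_Cons')
  qed
qed

lemma map2_tl: "tl (map2 f u w) = map2 f (tl u) (tl w)"
  by (cases u; cases w) auto
lemma map2_butlast: "length u = length w \<Longrightarrow> butlast (map2 f u w) = map2 f (butlast u) (butlast w)"
  by (simp add: butlast_conv_take take_zip take_map)

lemma nf_minus: "length u = m \<Longrightarrow> length w = m \<Longrightarrow> i \<le> m \<Longrightarrow>
   nerve_face m i (nerve_minus u w) = nerve_minus (nerve_face m i u) (nerve_face m i (w::'h::ab_group_add list))"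
  unfolding nerve_face_def nerve_minus_def
  by (auto simp: map2_tl map2_butlast zip_append take_zip drop_zip take_map drop_map)

lemma nd_0: "nerve_degen n 0 v = 0 # v"
  by (simp add: nerve_degen_def)
lemma nd_cons: "nerve_degen n (Suc j) (a # v) = a # nerve_degen m j v"
  by (simp add: nerve_degen_def)
lemma nd_minus: "length u = length w \<Longrightarrow>
   nerve_degen n j (nerve_minus u w) = nerve_minus (nerve_degen n j u) (nerve_degen n j (w::'h::ab_group_add list))"
  unfolding nerve_degen_def nerve_minus_def
  by (simp add: zip_append take_zip drop_zip take_map drop_map)


lemma eta_len: "length (eta_cocycle \<gamma> d n x) = n - 1"
  by (induction \<gamma> d n x rule: eta_cocycle.induct) auto

lemma eta_unfold: "eta_cocycle \<gamma> d (Suc (Suc n)) x = \<gamma> (top_faces d n x) #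
   nerve_minus (eta_cocycle \<gamma> d (Suc n) (d (Suc (Suc n)) 1 x)) (eta_cocycle \<gamma> d (Suc n) (d (Suc (Suc n)) 0 x))"
  by (cases n) auto

declare eta_cocycle.simps(3,4)[simp del]

lemma cocyc: "normalized_2_cocycle X d s \<gamma> \<Longrightarrow> y \<in> X (Suc (Suc (Suc 0))) \<Longrightarrow>
  \<gamma> (d (Suc (Suc (Suc 0))) 0 y) - \<gamma> (d (Suc (Suc (Suc 0))) 1 y) + \<gamma> (d (Suc (Suc (Suc 0))) (Suc (Suc 0)) y)
   - \<gamma> (d (Suc (Suc (Suc 0))) (Suc (Suc (Suc 0))) y) = 0"
  unfolding normalized_2_cocycle_def by (simp add: numeral_3_eq_3 numeral_2_eq_2)

lemma cocyc_norm: "normalized_2_cocycle X d s \<gamma> \<Longrightarrow> y \<in> X (Suc 0) \<Longrightarrow> j \<le> Suc 0 \<Longrightarrow> \<gamma> (s (Suc 0) j y) = 0"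
  unfolding normalized_2_cocycle_def by simp

lemma eta_s0: "simplicial_set X d s \<Longrightarrow> normalized_2_cocycle X d s \<gamma> \<Longrightarrow> x \<in> X n \<Longrightarrow>
   eta_cocycle \<gamma> d (Suc n) (s n 0 x) = replicate n 0"
proof (cases n)
  case 0 then show ?thesis by simp
next
  case (Suc m)
  assume ss: "simplicial_set X d s" and co: "normalized_2_cocycle X d s \<gamma>" and x: "x \<in> X n"
  have x': "x \<in> X (Suc m)" using x Suc by simp
  obtain y where y: "y \<in> X (Suc 0)" "top_faces d m (s (Suc m) 0 x) = s (Suc 0) 0 y"
    using tf_degen_low[OF ss x', of 0] by auto
  have e1: "d (Suc (Suc m)) 1 (s (Suc m) 0 x) = x" using ss_ds3[OF ss, of 0 "Suc m" x] x' by simp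
  have e0: "d (Suc (Suc m)) 0 (s (Suc m) 0 x) = x" using ss_ds2[OF ss, of 0 "Suc m" x] x' by simp
  show ?thesis unfolding Suc eta_unfold e1 e0 y(2)
    using cocyc_norm[OF co y(1), of 0] by (simp add: nm_self eta_len)
qed

lemma eta_face: "simplicial_set X d s \<Longrightarrow> normalized_2_cocycle X d s \<gamma> \<Longrightarrow>
  x \<in> X (Suc (Suc m)) \<Longrightarrow> 0 < i \<Longrightarrow> i \<le> Suc m \<Longrightarrow>
  nerve_face (Suc m) i (eta_cocycle \<gamma> d (Suc (Suc m)) x) = eta_cocycle \<gamma> d (Suc m) (d (Suc (Suc m)) (Suc i) x)"
proof (induction m arbitrary: i x)
  case 0
  then have "i = 1" by simp
  then show ?case by (simp add: eta_unfold nerve_face_def)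
next
  case (Suc m)
  note ss = Suc.prems(1) and co = Suc.prems(2) and x = Suc.prems(3)
  show ?case
  proof (cases m)
    case 0
    have x3: "x \<in> X (Suc (Suc (Suc 0)))" using x 0 by simp
    have tf: "top_faces d (Suc 0) x = d (Suc (Suc (Suc 0))) (Suc (Suc (Suc 0))) x" by simp
    have C: "\<gamma> (d (Suc (Suc (Suc 0))) 0 x) - \<gamma> (d (Suc (Suc (Suc 0))) 1 x) + \<gamma> (d (Suc (Suc (Suc 0))) (Suc (Suc 0)) x)
   - \<gamma> (d (Suc (Suc (Suc 0))) (Suc (Suc (Suc 0))) x) = 0" by (rule cocyc[OF co x3])
    have "i = 1 \<or> i = Suc 1" using Suc.prems 0 by auto
    then show ?thesis
    proof
      assume i: "i = 1"
      show ?thesis unfolding 0 i eta_unfold tf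
        using C by (simp add: nerve_face_def eta_unfold algebra_simps)
    next
      assume i: "i = Suc 1"
      show ?thesis unfolding 0 i eta_unfold tf
        by (simp add: nerve_face_def eta_unfold)
    qed
  next
    case (Suc k)
    note mk = Suc
    have xk: "x \<in> X (Suc (Suc (Suc (Suc k))))" using x mk by simp
    define n4 where "n4 = Suc (Suc (Suc (Suc k)))"
    have A1: "d n4 1 x \<in> X (Suc (Suc (Suc k)))" using ss_d'[OF ss, of 1 "Suc (Suc (Suc k))" x] xk n4_def by simp
    have A0: "d n4 0 x \<in> X (Suc (Suc (Suc k)))" using ss_d'[OF ss, of 0 "Suc (Suc (Suc k))" x] xk n4_def by simp
    have lenA1: "length (eta_cocycle \<gamma> d (Suc (Suc (Suc k))) y) = Suc (Suc k)" for y by (simp add: eta_len)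
      have L: "eta_cocycle \<gamma> d n4 x = \<gamma> (top_faces d (Suc (Suc k)) x) #
          nerve_minus (eta_cocycle \<gamma> d (Suc (Suc (Suc k))) (d n4 1 x)) (eta_cocycle \<gamma> d (Suc (Suc (Suc k))) (d n4 0 x))"
        unfolding n4_def by (rule eta_unfold)
      have L3: "eta_cocycle \<gamma> d (Suc (Suc (Suc k))) y = \<gamma> (top_faces d (Suc k) y) #
          nerve_minus (eta_cocycle \<gamma> d (Suc (Suc k)) (d (Suc (Suc (Suc k))) 1 y)) (eta_cocycle \<gamma> d (Suc (Suc k)) (d (Suc (Suc (Suc k))) 0 y))" for y
        by (rule eta_unfold)
    show ?thesis
    proof (cases "i = 1")
      case True
      have dd12: "d (Suc (Suc (Suc k))) 1 (d n4 1 x) = d (Suc (Suc (Suc k))) 1 (d n4 (Suc (Suc 0)) x)"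
        using ss_dd[OF ss, of 1 "Suc (Suc 0)" "Suc (Suc k)" x] xk n4_def by simp
      have dd01: "d (Suc (Suc (Suc k))) 0 (d n4 1 x) = d (Suc (Suc (Suc k))) 0 (d n4 0 x)"
        using ss_dd[OF ss, of 0 1 "Suc (Suc k)" x] xk n4_def by simp
      have dd02: "d (Suc (Suc (Suc k))) 1 (d n4 0 x) = d (Suc (Suc (Suc k))) 0 (d n4 (Suc (Suc 0)) x)"
        using ss_dd[OF ss, of 0 "Suc (Suc 0)" "Suc (Suc k)" x] xk n4_def by simp
      have xk': "x \<in> X (Suc (Suc (Suc (Suc k))))" by (rule xk)
      have t3: "top_faces d (Suc (Suc k)) x = d (Suc (Suc (Suc 0))) (Suc (Suc (Suc 0))) (top_faces4 d (Suc k) x)"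
        using tf_top[OF ss, of x "Suc k"] xk by simp
      have tl: "top_faces d (Suc k) (d n4 i' x) = d (Suc (Suc (Suc 0))) i' (top_faces4 d (Suc k) x)"
        if "i' \<le> Suc (Suc (Suc 0))" for i'
        using tf_face_low[OF ss, of x "Suc k" i'] xk that n4_def by simp
      have U: "top_faces4 d (Suc k) x \<in> X (Suc (Suc (Suc 0)))" using tf4_mem[OF ss, of x "Suc k"] xk by simp
      note C = cocyc[OF co U]
      have head: "\<gamma> (top_faces d (Suc (Suc k)) x) + (\<gamma> (top_faces d (Suc k) (d n4 1 x)) - \<gamma> (top_faces d (Suc k) (d n4 0 x)))
          = \<gamma> (top_faces d (Suc k) (d n4 (Suc (Suc 0)) x))"
      proof -
        have tl0: "top_faces d (Suc k) (d n4 0 x) = d (Suc (Suc (Suc 0))) 0 (top_faces4 d (Suc k) x)" by (rule tl) simp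
        have tl1: "top_faces d (Suc k) (d n4 1 x) = d (Suc (Suc (Suc 0))) 1 (top_faces4 d (Suc k) x)" by (rule tl) simp
        have tl2: "top_faces d (Suc k) (d n4 (Suc (Suc 0)) x) = d (Suc (Suc (Suc 0))) (Suc (Suc 0)) (top_faces4 d (Suc k) x)" by (rule tl) simp
        show ?thesis unfolding t3 tl0 tl1 tl2
          using C by (simp add: algebra_simps del: top_faces_Suc top_faces4.simps)
      qed
      have "nerve_face (Suc (Suc (Suc k))) 1 (eta_cocycle \<gamma> d n4 x)
         = eta_cocycle \<gamma> d (Suc (Suc (Suc k))) (d n4 (Suc (Suc 0)) x)"
        unfolding L L3[of "d n4 1 x"] L3[of "d n4 0 x"] L3[of "d n4 (Suc (Suc 0)) x"] 
        unfolding dd12 dd01 dd02 nm_cons nf_1 head[symmetric]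
        by (simp only: nm_assoc eta_len)
      then show ?thesis using True mk n4_def by simp
    next
      case False
      then have i2: "2 \<le> i" using Suc.prems by simp
      have ile: "i \<le> Suc (Suc (Suc k))" using Suc.prems mk by simp
      have IH1: "nerve_face (Suc (Suc k)) (i - 1) (eta_cocycle \<gamma> d (Suc (Suc (Suc k))) (d n4 1 x))
          = eta_cocycle \<gamma> d (Suc (Suc k)) (d (Suc (Suc (Suc k))) i (d n4 1 x))"
        using Suc.IH[OF ss co, of "d n4 1 x" "i - 1"] A1 i2 ile mk by simp
      have IH0: "nerve_face (Suc (Suc k)) (i - 1) (eta_cocycle \<gamma> d (Suc (Suc (Suc k))) (d n4 0 x))
          = eta_cocycle \<gamma> d (Suc (Suc k)) (d (Suc (Suc (Suc k))) i (d n4 0 x))"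
        using Suc.IH[OF ss co, of "d n4 0 x" "i - 1"] A0 i2 ile mk by simp
      have dd1: "d (Suc (Suc (Suc k))) 1 (d n4 (Suc i) x) = d (Suc (Suc (Suc k))) i (d n4 1 x)"
        using ss_dd[OF ss, of 1 "Suc i" "Suc (Suc k)" x] xk n4_def i2 ile by simp
      have dd0: "d (Suc (Suc (Suc k))) 0 (d n4 (Suc i) x) = d (Suc (Suc (Suc k))) i (d n4 0 x)"
        using ss_dd[OF ss, of 0 "Suc i" "Suc (Suc k)" x] xk n4_def i2 ile by simp
      have th: "top_faces d (Suc k) (d n4 (Suc i) x) = top_faces d (Suc (Suc k)) x"
        using tf_face_high[OF ss, of x "Suc k" "Suc i"] xk n4_def i2 ile by simp
      have "nerve_face (Suc (Suc (Suc k))) i (eta_cocycle \<gamma> d n4 x)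
         = eta_cocycle \<gamma> d (Suc (Suc (Suc k))) (d n4 (Suc i) x)"
        unfolding L L3[of "d n4 (Suc i) x"] dd1 dd0 th
        using i2 ile IH1 IH0 by (simp add: nf_cons nf_minus eta_len del: top_faces_Suc)
      then show ?thesis using mk n4_def by simp
    qed
  qed
qed


lemma eta_degen: "simplicial_set X d s \<Longrightarrow> normalized_2_cocycle X d s \<gamma> \<Longrightarrow>
  x \<in> X (Suc m) \<Longrightarrow> 0 < j \<Longrightarrow> j \<le> Suc m \<Longrightarrow>
  eta_cocycle \<gamma> d (Suc (Suc m)) (s (Suc m) j x) = nerve_degen m (j - 1) (eta_cocycle \<gamma> d (Suc m) x)"
proof (induction m arbitrary: j x)
  case 0
  then have j: "j = Suc 0" by simp
  show ?case unfolding j using cocyc_norm[OF 0(2) 0(3), of "Suc 0"]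
    by (simp add: eta_unfold nerve_degen_def)
next
  case (Suc m)
  note ss = Suc.prems(1) and co = Suc.prems(2) and x = Suc.prems(3)
  have L: "eta_cocycle \<gamma> d (Suc (Suc (Suc m))) y = \<gamma> (top_faces d (Suc m) y) #
      nerve_minus (eta_cocycle \<gamma> d (Suc (Suc m)) (d (Suc (Suc (Suc m))) 1 y)) (eta_cocycle \<gamma> d (Suc (Suc m)) (d (Suc (Suc (Suc m))) 0 y))" for y
    by (rule eta_unfold)
  have L2: "eta_cocycle \<gamma> d (Suc (Suc m)) y = \<gamma> (top_faces d m y) #
      nerve_minus (eta_cocycle \<gamma> d (Suc m) (d (Suc (Suc m)) 1 y)) (eta_cocycle \<gamma> d (Suc m) (d (Suc (Suc m)) 0 y))" for y
    by (rule eta_unfold)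
  show ?case
  proof (cases "j = 1")
    case True
    obtain y where y: "y \<in> X (Suc 0)" "top_faces d (Suc m) (s (Suc (Suc m)) 1 x) = s (Suc 0) 1 y"
      using tf_degen_low[OF ss x, of 1] by auto
    have e1: "d (Suc (Suc (Suc m))) 1 (s (Suc (Suc m)) 1 x) = x" using ss_ds2[OF ss, of 1 "Suc (Suc m)" x] x by simp
    have e0: "d (Suc (Suc (Suc m))) 0 (s (Suc (Suc m)) 1 x) = s (Suc m) 0 (d (Suc (Suc m)) 0 x)"
      using ss_ds1[OF ss, of 0 1 "Suc (Suc m)" x] x by simp
    have x0: "d (Suc (Suc m)) 0 x \<in> X (Suc m)" using ss_d'[OF ss, of 0 "Suc m" x] x by simp
    have z: "eta_cocycle \<gamma> d (Suc (Suc m)) (s (Suc m) 0 (d (Suc (Suc m)) 0 x)) = replicate (Suc m) 0"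
      by (rule eta_s0[OF ss co x0])
    have g: "\<gamma> (s (Suc 0) 1 y) = 0" using cocyc_norm[OF co y(1), of 1] by simp
    have "eta_cocycle \<gamma> d (Suc (Suc (Suc m))) (s (Suc (Suc m)) 1 x) = 0 # eta_cocycle \<gamma> d (Suc (Suc m)) x"
      unfolding L e1 e0 y(2) g z
      using nm_zero[of "eta_cocycle \<gamma> d (Suc (Suc m)) x"] by (simp add: eta_len)
    then show ?thesis using True by (simp add: nd_0)
  next
    case False
    define j' where "j' = j - 2"
    have j': "j = Suc (Suc j')" using Suc.prems(4) False unfolding j'_def by simp
    have jle: "Suc j' \<le> Suc m" using Suc.prems(5) j' by simp
    have x1: "d (Suc (Suc m)) 1 x \<in> X (Suc m)" using ss_d'[OF ss, of 1 "Suc m" x] x by simp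
    have x0: "d (Suc (Suc m)) 0 x \<in> X (Suc m)" using ss_d'[OF ss, of 0 "Suc m" x] x by simp
    have e1: "d (Suc (Suc (Suc m))) 1 (s (Suc (Suc m)) j x) = s (Suc m) (Suc j') (d (Suc (Suc m)) 1 x)"
      using ss_ds1[OF ss, of 1 j "Suc (Suc m)" x] x j' Suc.prems(5) by simp
    have e0: "d (Suc (Suc (Suc m))) 0 (s (Suc (Suc m)) j x) = s (Suc m) (Suc j') (d (Suc (Suc m)) 0 x)"
      using ss_ds1[OF ss, of 0 j "Suc (Suc m)" x] x j' Suc.prems(5) by simp
    have IH1: "eta_cocycle \<gamma> d (Suc (Suc m)) (s (Suc m) (Suc j') (d (Suc (Suc m)) 1 x))
       = nerve_degen m j' (eta_cocycle \<gamma> d (Suc m) (d (Suc (Suc m)) 1 x))"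
      using Suc.IH[OF ss co x1, of "Suc j'"] jle by simp
    have IH0: "eta_cocycle \<gamma> d (Suc (Suc m)) (s (Suc m) (Suc j') (d (Suc (Suc m)) 0 x))
       = nerve_degen m j' (eta_cocycle \<gamma> d (Suc m) (d (Suc (Suc m)) 0 x))"
      using Suc.IH[OF ss co x0, of "Suc j'"] jle by simp
    have th: "top_faces d (Suc m) (s (Suc (Suc m)) j x) = top_faces d m x"
      using tf_degen_high[OF ss x, of j] j' Suc.prems(5) by simp
    have "eta_cocycle \<gamma> d (Suc (Suc (Suc m))) (s (Suc (Suc m)) j x)
        = nerve_degen (Suc m) (Suc j') (eta_cocycle \<gamma> d (Suc (Suc m)) x)"
      unfolding L e1 e0 th IH1 IH0
      unfolding L2 nd_cons[of "Suc m" j' _ _ m]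
      by (simp add: nd_minus eta_len del: top_faces_Suc)
    then show ?thesis using j' by simp
  qed
qed

theorem mainTheorem10:
  fixes X :: "nat \<Rightarrow> 'x set" and d s :: "nat \<Rightarrow> nat \<Rightarrow> 'x \<Rightarrow> 'x"
    and \<gamma> :: "'x \<Rightarrow> 'h::ab_group_add"
  assumes "simplicial_set X d s"
    and "normalized_2_cocycle X d s \<gamma>"
  shows "twisting_function X d s (eta_cocycle \<gamma> d)"
  unfolding twisting_function_def
proof (intro conjI allI impI)
  fix n x assume "1 \<le> n" "x \<in> X n"
  show "length (eta_cocycle \<gamma> d n x) = n - 1" by (rule eta_len)
next
  fix n x assume n: "2 \<le> n" and x: "x \<in> X n"
  define m where "m = n - 2"
  have m: "n = Suc (Suc m)" using n unfolding m_def by simp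
  show "nerve_face (n - 1) 0 (eta_cocycle \<gamma> d n x) =
        nerve_minus (eta_cocycle \<gamma> d (n - 1) (d n 1 x)) (eta_cocycle \<gamma> d (n - 1) (d n 0 x))"
    unfolding m nf_0 eta_unfold by simp
next
  fix n i x assume n: "2 \<le> n" and i: "0 < i" "i \<le> n - 1" and x: "x \<in> X n"
  define m where "m = n - 2"
  have m: "n = Suc (Suc m)" using n unfolding m_def by simp
  show "nerve_face (n - 1) i (eta_cocycle \<gamma> d n x) = eta_cocycle \<gamma> d (n - 1) (d n (Suc i) x)"
    using eta_face[OF assms, of x m i] x i unfolding m by simp
next
  fix n x assume x: "x \<in> X n"
  show "eta_cocycle \<gamma> d (Suc n) (s n 0 x) = replicate n 0"
    by (rule eta_s0[OF assms x])
next
  fix n j x assume j: "0 < j" "j \<le> n" and x: "x \<in> X n"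
  define m where "m = n - 1"
  have m: "n = Suc m" using j unfolding m_def by simp
  show "eta_cocycle \<gamma> d (Suc n) (s n j x) = nerve_degen (n - 1) (j - 1) (eta_cocycle \<gamma> d n x)"
    using eta_degen[OF assms, of x m j] x j unfolding m by simp
qed

end
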